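(* Fix $i\in[1,n]$ and let $\alpha(i,j)=\max\{\beta(i,j),\gamma(i,j)\}$ for $j\in[i,n]$. Let $j'(i)$ be the smallest index $j\in[i,n]$ with $\gamma(i,j)\le\beta(i,j)$ (it exists since $\gamma(i,n)=0\le\beta(i,n)$). Then the minimum of $\alpha(i,j)$ over $j\in[i,n]$ is attained at $j=j'(i)$ or at $j=j'(i)-1$ (the latter only possible when $j'(i)>i$); that is, $\min_{j\in[i,n]}\alpha(i,j)=\min\{\alpha(i,j):j\in\{j'(i)-1,j'(i)\}\cap[i,n]\}$.
   Context: Let $v_1,\dots,v_n$ be points of a metric space with metric $|\cdot|$ (symmetric, nonnegative, $|v_iv_j|=0$ iff $i=j$, triangle inequality). For $i\le j$ let $d_P(v_i,v_j)=\sum_{k=i}^{j-1}|v_kv_{k+1}|$ and $d_P(v_j,v_i)=d_P(v_i,v_j)$. For $1\le i\le j\le n$: $\beta(i,j)=\max_{k\in[i,j]}\min\{d_P(v_i,v_k),|v_iv_j|+d_P(v_k,v_j)\}$; $\gamma(i,j)=|v_iv_j|+d_P(v_j,v_n)$ if $j<n$ and $\gamma(i,n)=0$. Then $\alpha(i,j)$ equals the maximum over $k\in[i,n]$ of the shortest-path distance from $v_i$ to $v_k$ in the path $v_1\cdots v_n$ augmented with an edge $e(v_i,v_j)$ of length $|v_iv_j|$. *)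

theory Defs
  imports Main "HOL-Analysis.Analysis"
begin

definition dP :: "(nat \<Rightarrow> 'a::metric_space) \<Rightarrow> nat \<Rightarrow> nat \<Rightarrow> real" where
  "dP v i j = (if i \<le> j then (\<Sum>k=i..<j. dist (v k) (v (k+1)))
               else (\<Sum>k=j..<i. dist (v k) (v (k+1))))"

definition beta :: "(nat \<Rightarrow> 'a::metric_space) \<Rightarrow> nat \<Rightarrow> nat \<Rightarrow> real" where
  "beta v i j = Max ((\<lambda>k. min (dP v i k) (dist (v i) (v j) + dP v k j)) ` {i..j})"

definition gamma :: "(nat \<Rightarrow> 'a::metric_space) \<Rightarrow> nat \<Rightarrow> nat \<Rightarrow> nat \<Rightarrow> real" where
  "gamma v n i j = (if j < n then dist (v i) (v j) + dP v j n else 0)"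

definition alpha :: "(nat \<Rightarrow> 'a::metric_space) \<Rightarrow> nat \<Rightarrow> nat \<Rightarrow> nat \<Rightarrow> real" where
  "alpha v n i j = max (beta v i j) (gamma v n i j)"

definition jprime :: "(nat \<Rightarrow> 'a::metric_space) \<Rightarrow> nat \<Rightarrow> nat \<Rightarrow> nat" where
  "jprime v n i = (LEAST j. i \<le> j \<and> j \<le> n \<and> gamma v n i j \<le> beta v i j)"

end

theory Submission
  imports Defs
begin

lemma dP_refl[simp]: "dP v i i = 0" by (simp add: dP_def)

lemma dP_nonneg: "0 \<le> dP v i j"
  by (simp add: dP_def sum_nonneg)

lemma dP_Suc: "k \<le> j \<Longrightarrow> dP v k (Suc j) = dP v k j + dist (v j) (v (Suc j))"
  by (simp add: dP_def)

lemma dP_Suc_left: "Suc j \<le> n \<Longrightarrow> dP v j n = dist (v j) (v (Suc j)) + dP v (Suc j) n"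
  by (simp add: dP_def sum.atLeast_Suc_lessThan)

lemma gamma_nonneg: "0 \<le> gamma v n i j"
  by (simp add: gamma_def dP_nonneg)

lemma gamma_step: "Suc j \<le> n \<Longrightarrow> gamma v n i (Suc j) \<le> gamma v n i j"
proof (cases "Suc j = n")
  case True then show ?thesis by (simp add: gamma_def dP_nonneg)
next
  case False
  assume a: "Suc j \<le> n"
  have t: "dist (v i) (v (Suc j)) \<le> dist (v i) (v j) + dist (v j) (v (Suc j))"
    by (rule dist_triangle)
  show ?thesis using False a t dP_Suc_left[OF a, of v]
    by (simp add: gamma_def)
qed

lemma gamma_anti: "j \<le> j' \<Longrightarrow> j' \<le> n \<Longrightarrow> gamma v n i j' \<le> gamma v n i j"
proof (induction j' rule: dec_induct)
  case base then show ?case by simp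
next
  case (step m) then show ?case using gamma_step[of m n v i] by simp
qed

lemma beta_nonneg: "i \<le> j \<Longrightarrow> 0 \<le> beta v i j"
proof -
  assume "i \<le> j"
  have "min (dP v i i) (dist (v i) (v j) + dP v i j) \<le> beta v i j"
    unfolding beta_def using \<open>i \<le> j\<close> by (intro Max_ge) (auto intro!: image_eqI[where x=i])
  moreover have "min (dP v i i) (dist (v i) (v j) + dP v i j) = 0"
    using dP_nonneg[of v i j] by simp
  ultimately show ?thesis by simp
qed

lemma beta_step: "i \<le> j \<Longrightarrow> beta v i j \<le> beta v i (Suc j)"
proof -
  assume ij: "i \<le> j"
  show ?thesis unfolding beta_def
  proof (rule Max.boundedI)
    show "finite ((\<lambda>k. min (dP v i k) (dist (v i) (v j) + dP v k j)) ` {i..j})" by simp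
    show "(\<lambda>k. min (dP v i k) (dist (v i) (v j) + dP v k j)) ` {i..j} \<noteq> {}" using ij by simp
    fix a assume "a \<in> (\<lambda>k. min (dP v i k) (dist (v i) (v j) + dP v k j)) ` {i..j}"
    then obtain k where k: "k \<in> {i..j}" and a: "a = min (dP v i k) (dist (v i) (v j) + dP v k j)" by auto
    have t: "dist (v i) (v j) \<le> dist (v i) (v (Suc j)) + dist (v j) (v (Suc j))"
      using dist_triangle[of "v i" "v j" "v (Suc j)"] by (simp add: dist_commute)
    have "a \<le> min (dP v i k) (dist (v i) (v (Suc j)) + dP v k (Suc j))"
      using a t k dP_Suc[of k j v] by auto
    also have "\<dots> \<le> Max ((\<lambda>k. min (dP v i k) (dist (v i) (v (Suc j)) + dP v k (Suc j))) ` {i..Suc j})"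
      using k by (intro Max_ge) auto
    finally show "a \<le> Max ((\<lambda>k. min (dP v i k) (dist (v i) (v (Suc j)) + dP v k (Suc j))) ` {i..Suc j})" .
  qed
qed

lemma beta_mono: "i \<le> j \<Longrightarrow> j \<le> j' \<Longrightarrow> beta v i j \<le> beta v i j'"
proof -
  assume ij: "i \<le> j"
  show "j \<le> j' \<Longrightarrow> beta v i j \<le> beta v i j'"
  proof (induction j' rule: dec_induct)
    case base then show ?case by simp
  next
    case (step m) then show ?case using beta_step[of i m v] ij by simp
  qed
qed

theorem mainTheorem7:
  fixes v :: "nat \<Rightarrow> 'a::metric_space" and n i :: nat
  assumes "inj_on v {1..n}"
    and "1 \<le> i" and "i \<le> n"
  shows "Min (alpha v n i ` {i..n}) =
         Min (alpha v n i ` ({jprime v n i - 1, jprime v n i} \<inter> {i..n}))"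
proof -
  define J where "J = jprime v n i"
  let ?P = "\<lambda>j. i \<le> j \<and> j \<le> n \<and> gamma v n i j \<le> beta v i j"
  have Pn: "?P n" using assms(3) beta_nonneg[of i n v] by (simp add: gamma_def)
  have PJ: "?P J" unfolding J_def jprime_def by (rule LeastI[of ?P n, OF Pn])
  have notP: "\<And>j. j < J \<Longrightarrow> \<not> ?P j" unfolding J_def jprime_def by (rule not_less_Least)
  define S where "S = {J - 1, J} \<inter> {i..n}"
  have JS: "J \<in> S" using PJ by (simp add: S_def)
  have Ssub: "S \<subseteq> {i..n}" by (simp add: S_def)
  have finS: "finite S" by (simp add: S_def)
  have le1: "Min (alpha v n i ` {i..n}) \<le> Min (alpha v n i ` S)"
    using JS Ssub by (intro Min_antimono) auto
  have le2: "Min (alpha v n i ` S) \<le> Min (alpha v n i ` {i..n})"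
  proof (rule Min.boundedI)
    show "finite (alpha v n i ` {i..n})" by simp
    show "alpha v n i ` {i..n} \<noteq> {}" using assms(3) by simp
    fix a assume "a \<in> alpha v n i ` {i..n}"
    then obtain j where j: "j \<in> {i..n}" and a: "a = alpha v n i j" by auto
    show "Min (alpha v n i ` S) \<le> a"
    proof (cases "J \<le> j")
      case True
      have "Min (alpha v n i ` S) \<le> alpha v n i J" using JS finS by (intro Min_le) auto
      also have "\<dots> = beta v i J" using PJ by (simp add: alpha_def)
      also have "\<dots> \<le> beta v i j" using True PJ by (intro beta_mono) auto
      also have "\<dots> \<le> a" by (simp add: a alpha_def)
      finally show ?thesis .
    next
      case False
      have J1S: "J - 1 \<in> S" using False j PJ by (auto simp: S_def)
      have nP: "\<not> ?P (J - 1)" using False j by (intro notP) auto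
      have "Min (alpha v n i ` S) \<le> alpha v n i (J - 1)" using J1S finS by (intro Min_le) auto
      also have "\<dots> = gamma v n i (J - 1)" using nP J1S by (auto simp: alpha_def S_def)
      also have "\<dots> \<le> gamma v n i j" using False j PJ by (intro gamma_anti) auto
      also have "\<dots> \<le> a" by (simp add: a alpha_def)
      finally show ?thesis .
    qed
  qed
  show ?thesis using le1 le2 unfolding J_def[symmetric] S_def[symmetric] by simp
qed

end
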